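(* Let $P$ be an arbitrary set of atomic propositions and let $\mathcal{C}: 2^P \to 2^P$ be a C-logics over $P$. Let $\mathcal{L}$ be the closure of $P$ under a binary connective $\wedge$ and a unary connective $\neg$ (the set of formulas built from $P$ with $\wedge, \neg$). Then there exists a C-logics $\mathcal{C}': 2^{\mathcal{L}} \to 2^{\mathcal{L}}$ that satisfies $\wedge$-R, $\neg$-R1 and $\neg$-R2, such that $\mathcal{C}(A) = P \cap \mathcal{C}'(A)$ for every $A \subseteq P$.
   Context: A C-logics on a set $S$ is a map $\mathcal{D}: 2^S\to 2^S$ satisfying Inclusion ($A \subseteq \mathcal{D}(A)$) and Cumulativity ($A\subseteq B\subseteq \mathcal{D}(A) \Rightarrow \mathcal{D}(A)=\mathcal{D}(B)$) for all $A,B\subseteq S$. For $\mathcal{C}'$ on $\mathcal{L}$, writing $\mathcal{C}'(A, a_1,\dots,a_k)$ for $\mathcal{C}'(A\cup\{a_1,\dots,a_k\})$: $\wedge$-R: $\mathcal{C}'(A, a\wedge b) = \mathcal{C}'(A,a,b)$; $\neg$-R1: $\mathcal{C}'(A,a,\neg a) = \mathcal{L}$; $\neg$-R2: if $\mathcal{C}'(A,\neg a)=\mathcal{L}$ then $a\in\mathcal{C}'(A)$; for all $A\subseteq\mathcal{L}$, $a,b\in\mathcal{L}$. *)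

theory Defs
  imports Main
begin

datatype 'a form = Atom 'a | Conj "'a form" "'a form" | Neg "'a form"

fun atoms :: "'a form \<Rightarrow> 'a set" where
  "atoms (Atom p) = {p}"
| "atoms (Conj a b) = atoms a \<union> atoms b"
| "atoms (Neg a) = atoms a"

definition lang :: "'a set \<Rightarrow> 'a form set" where
  "lang P = {f. atoms f \<subseteq> P}"

definition c_logics :: "'b set \<Rightarrow> ('b set \<Rightarrow> 'b set) \<Rightarrow> bool" where
  "c_logics S D \<longleftrightarrow>
     (\<forall>A. A \<subseteq> S \<longrightarrow> D A \<subseteq> S) \<and>
     (\<forall>A. A \<subseteq> S \<longrightarrow> A \<subseteq> D A) \<and>
     (\<forall>A B. A \<subseteq> S \<longrightarrow> B \<subseteq> S \<longrightarrow> A \<subseteq> B \<longrightarrow> B \<subseteq> D A \<longrightarrow> D A = D B)"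

definition conj_R :: "'a set \<Rightarrow> ('a form set \<Rightarrow> 'a form set) \<Rightarrow> bool" where
  "conj_R P D \<longleftrightarrow> (\<forall>A a b. A \<subseteq> lang P \<longrightarrow> a \<in> lang P \<longrightarrow> b \<in> lang P \<longrightarrow>
     D (A \<union> {Conj a b}) = D (A \<union> {a, b}))"

definition neg_R1 :: "'a set \<Rightarrow> ('a form set \<Rightarrow> 'a form set) \<Rightarrow> bool" where
  "neg_R1 P D \<longleftrightarrow> (\<forall>A a. A \<subseteq> lang P \<longrightarrow> a \<in> lang P \<longrightarrow>
     D (A \<union> {a, Neg a}) = lang P)"

definition neg_R2 :: "'a set \<Rightarrow> ('a form set \<Rightarrow> 'a form set) \<Rightarrow> bool" where
  "neg_R2 P D \<longleftrightarrow> (\<forall>A a. A \<subseteq> lang P \<longrightarrow> a \<in> lang P \<longrightarrow>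
     D (A \<union> {Neg a}) = lang P \<longrightarrow> a \<in> D A)"

end

theory Submission
  imports Defs
begin

fun ev :: "'a set \<Rightarrow> 'a form \<Rightarrow> bool" where
  "ev v (Atom p) = (p \<in> v)"
| "ev v (Conj a b) = (ev v a \<and> ev v b)"
| "ev v (Neg a) = (\<not> ev v a)"

definition Mo :: "'a set \<Rightarrow> 'a form set \<Rightarrow> 'a set set" where
  "Mo P B = {v. v \<subseteq> P \<and> (\<forall>b\<in>B. ev v b)}"

definition Th :: "'a set \<Rightarrow> 'a set set \<Rightarrow> 'a form set" where
  "Th P M = {a \<in> lang P. \<forall>v\<in>M. ev v a}"

definition ff :: "'a set \<Rightarrow> 'a set set \<Rightarrow> 'a set" where
  "ff P M = {p \<in> P. \<forall>v\<in>M. p \<in> v}"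

definition Up :: "'a set \<Rightarrow> 'a set \<Rightarrow> 'a set set" where
  "Up P X = {v. X \<subseteq> v \<and> v \<subseteq> P}"

definition Sel :: "'a set \<Rightarrow> ('a set \<Rightarrow> 'a set) \<Rightarrow> 'a set set \<Rightarrow> 'a set set" where
  "Sel P C M = (if Up P (C (ff P M)) \<subseteq> M then Up P (C (ff P M)) else M)"

lemma cl_sub: assumes "c_logics S D" "A \<subseteq> S" shows "D A \<subseteq> S"
proof -
  have "\<forall>A. A \<subseteq> S \<longrightarrow> D A \<subseteq> S" using assms(1) unfolding c_logics_def by (rule conjunct1)
  then show ?thesis using assms(2) by simp
qed
lemma cl_inc: assumes "c_logics S D" "A \<subseteq> S" shows "A \<subseteq> D A"
proof -
  have "\<forall>A. A \<subseteq> S \<longrightarrow> A \<subseteq> D A" using assms(1) unfolding c_logics_def by (rule conjunct1[OF conjunct2])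
  then show ?thesis using assms(2) by simp
qed
lemma cl_cum: assumes "c_logics S D" "A \<subseteq> S" "B \<subseteq> S" "A \<subseteq> B" "B \<subseteq> D A" shows "D A = D B"
proof -
  have "\<forall>A B. A \<subseteq> S \<longrightarrow> B \<subseteq> S \<longrightarrow> A \<subseteq> B \<longrightarrow> B \<subseteq> D A \<longrightarrow> D A = D B"
    using assms(1) unfolding c_logics_def by (rule conjunct2[OF conjunct2])
  then have "A \<subseteq> S \<longrightarrow> B \<subseteq> S \<longrightarrow> A \<subseteq> B \<longrightarrow> B \<subseteq> D A \<longrightarrow> D A = D B" by (rule spec[of _ B, OF spec[of _ A]])
  then show ?thesis using assms(2-5) by (rule mp[OF mp[OF mp[OF mp]]])
qed

lemma Sel_sub: "Sel P C M \<subseteq> M"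
  unfolding Sel_def by auto

lemma Sel_ne:
  assumes "c_logics P C" "M \<noteq> {}"
  shows "Sel P C M \<noteq> {}"
proof -
  have "C (ff P M) \<subseteq> P" using cl_sub[OF assms(1)] unfolding ff_def by auto
  then have "C (ff P M) \<in> Up P (C (ff P M))" unfolding Up_def by auto
  then show ?thesis using assms(2) unfolding Sel_def by auto
qed

lemma ff_Up: assumes "X \<subseteq> P" shows "ff P (Up P X) = X"
proof
  have "X \<in> Up P X" using assms unfolding Up_def by blast
  then show "ff P (Up P X) \<subseteq> X" unfolding ff_def by blast
  show "X \<subseteq> ff P (Up P X)" using assms unfolding ff_def Up_def by blast
qed

lemma Sel_cum:
  assumes c: "c_logics P C" and h: "Sel P C M \<subseteq> M'" "M' \<subseteq> M"
  shows "Sel P C M' = Sel P C M"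
proof (cases "Up P (C (ff P M)) \<subseteq> M")
  case True
  define F where "F = ff P M"
  have S: "Sel P C M = Up P (C F)" using True unfolding Sel_def F_def by simp
  have FP: "F \<subseteq> P" unfolding F_def ff_def by auto
  have CFP: "C F \<subseteq> P" using cl_sub[OF c FP] .
  have 1: "F \<subseteq> ff P M'" using h(2) unfolding F_def ff_def by auto
  have "ff P M' \<subseteq> ff P (Up P (C F))" using h(1) S unfolding ff_def by auto
  then have 2: "ff P M' \<subseteq> C F" using ff_Up[OF CFP] by simp
  have F'P: "ff P M' \<subseteq> P" unfolding ff_def by auto
  have "C F = C (ff P M')" using cl_cum[OF c FP F'P 1 2] .
  then have "Up P (C (ff P M')) \<subseteq> M'" using S h(1) by simp
  then have "Sel P C M' = Up P (C (ff P M'))" unfolding Sel_def by simp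
  then show ?thesis using S \<open>C F = C (ff P M')\<close> by simp
next
  case False
  then have "Sel P C M = M" unfolding Sel_def by simp
  then have "M' = M" using h by auto
  then show ?thesis by simp
qed

lemma Th_L: "a \<in> lang P \<Longrightarrow> Th P X = lang P \<Longrightarrow> X = {}"
proof -
  assume a: "a \<in> lang P" and t: "Th P X = lang P"
  have "Conj a (Neg a) \<in> lang P" using a unfolding lang_def by auto
  then have "Conj a (Neg a) \<in> Th P X" using t by simp
  then show "X = {}" unfolding Th_def by auto
qed

theorem theorem6:
  fixes P :: "'a set" and C :: "'a set \<Rightarrow> 'a set"
  assumes "c_logics P C"
  shows "\<exists>C' :: 'a form set \<Rightarrow> 'a form set.
           c_logics (lang P) C' \<and> conj_R P C' \<and> neg_R1 P C' \<and> neg_R2 P C' \<and>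
           (\<forall>A. A \<subseteq> P \<longrightarrow> C A = {p \<in> P. Atom p \<in> C' (Atom ` A)})"
proof (rule exI[where x="\<lambda>B. Th P (Sel P C (Mo P B))"], intro conjI)
  let ?C = "\<lambda>B. Th P (Sel P C (Mo P B))"
  note c = assms
  show "c_logics (lang P) ?C"
    unfolding c_logics_def
  proof (intro conjI allI impI)
    fix A assume "A \<subseteq> lang P"
    show "?C A \<subseteq> lang P" unfolding Th_def by auto
    show "A \<subseteq> ?C A"
    proof
      fix x assume x: "x \<in> A"
      have "\<forall>v\<in>Sel P C (Mo P A). ev v x"
      proof
        fix v assume "v \<in> Sel P C (Mo P A)"
        then have "v \<in> Mo P A" using Sel_sub by blast
        then show "ev v x" using x unfolding Mo_def by blast
      qed
      then show "x \<in> ?C A" using x \<open>A \<subseteq> lang P\<close> unfolding Th_def by blast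
    qed
  next
    fix A B assume h: "A \<subseteq> lang P" "B \<subseteq> lang P" "A \<subseteq> B" "B \<subseteq> ?C A"
    have "Sel P C (Mo P A) \<subseteq> Mo P B"
    proof
      fix v assume v: "v \<in> Sel P C (Mo P A)"
      then have "v \<in> Mo P A" using Sel_sub by blast
      have "\<forall>b\<in>B. ev v b"
      proof
        fix b assume "b \<in> B"
        then have "b \<in> Th P (Sel P C (Mo P A))" by (rule subsetD[OF h(4)])
        then show "ev v b" using v unfolding Th_def by simp
      qed
      then show "v \<in> Mo P B" using \<open>v \<in> Mo P A\<close> unfolding Mo_def by simp
    qed
    moreover have "Mo P B \<subseteq> Mo P A" using h(3) unfolding Mo_def by auto
    ultimately have "Sel P C (Mo P B) = Sel P C (Mo P A)" by (rule Sel_cum[OF c])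
    then show "?C A = ?C B" by simp
  qed
  show "conj_R P ?C" unfolding conj_R_def
  proof (intro allI impI)
    fix A a b
    have "Mo P (A \<union> {Conj a b}) = Mo P (A \<union> {a, b})" unfolding Mo_def by auto
    then show "?C (A \<union> {Conj a b}) = ?C (A \<union> {a, b})" by simp
  qed
  show "neg_R1 P ?C" unfolding neg_R1_def
  proof (intro allI impI)
    fix A a
    have "Mo P (A \<union> {a, Neg a}) = {}" unfolding Mo_def by auto
    moreover have "Sel P C {} = {}" using Sel_sub by blast
    ultimately show "?C (A \<union> {a, Neg a}) = lang P" unfolding Th_def by simp
  qed
  show "neg_R2 P ?C" unfolding neg_R2_def
  proof (intro allI impI)
    fix A a assume h: "A \<subseteq> lang P" "a \<in> lang P" "?C (A \<union> {Neg a}) = lang P"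
    have "Sel P C (Mo P (A \<union> {Neg a})) = {}" using Th_L[OF h(2) h(3)] .
    then have "Mo P (A \<union> {Neg a}) = {}" using Sel_ne[OF c] by blast
    then have "\<forall>v\<in>Mo P A. ev v a" unfolding Mo_def by auto
    then show "a \<in> ?C A" using Sel_sub[of P C "Mo P A"] h(2) unfolding Th_def by blast
  qed
  show "\<forall>A. A \<subseteq> P \<longrightarrow> C A = {p \<in> P. Atom p \<in> ?C (Atom ` A)}"
  proof (intro allI impI)
    fix A assume A: "A \<subseteq> P"
    have M: "Mo P (Atom ` A) = Up P A" unfolding Mo_def Up_def by auto
    have CP: "C A \<subseteq> P" and AC: "A \<subseteq> C A" using cl_sub[OF c A] cl_inc[OF c A] by auto
    have "Up P (C A) \<subseteq> Up P A" using AC unfolding Up_def by auto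
    then have S: "Sel P C (Up P A) = Up P (C A)" unfolding Sel_def using ff_Up[OF A] by simp
    show "C A = {p \<in> P. Atom p \<in> ?C (Atom ` A)}"
    proof
      show "C A \<subseteq> {p \<in> P. Atom p \<in> ?C (Atom ` A)}"
        using CP unfolding M S unfolding Th_def Up_def lang_def by auto
      show "{p \<in> P. Atom p \<in> ?C (Atom ` A)} \<subseteq> C A"
      proof
        fix p assume "p \<in> {p \<in> P. Atom p \<in> ?C (Atom ` A)}"
        then have "\<forall>v\<in>Up P (C A). ev v (Atom p)" unfolding M S unfolding Th_def by blast
        moreover have "C A \<in> Up P (C A)" using CP unfolding Up_def by blast
        ultimately show "p \<in> C A" by simp
      qed
    qed
  qed
qed

end
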